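(* Let $k \ge 2$. For any $n, m \in \mathbb{N}$ with $1 \le m \le n$, we have $n - o_n(m) = \mathcal{G}(nk - m)$.
   Context: Josephus problem: the numbers $1,2,\dots,n$ are arranged in a circle; starting the count at $1$, every $k$-th number still present is removed (counting resumes with the next remaining number after each removal) until one number remains. For $1 \le m \le n$, $o_n(m)=i$ if $m$ is the $i$-th number removed ($1 \le i \le n-1$), and $o_n(m)=n$ if $m$ is the number that remains. Maximum Nim with rule function $f(x)=\lfloor x/k\rfloor$: a position is a pile of $x \ge 0$ stones, and from $x$ one may move to $x-u$ for any integer $u$ with $1 \le u \le \lfloor x/k \rfloor$. The Grundy number is defined recursively by $\mathcal{G}(x) = \mathrm{mex}\{\mathcal{G}(x-u) : 1 \le u \le \lfloor x/k\rfloor\}$, where $\mathrm{mex}(S)$ is the least non-negative integer not in $S$ (so $\mathcal{G}(x)=0$ when $\lfloor x/k\rfloor = 0$). *)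

theory Defs
  imports Main
begin

text \<open>The list holds the remaining numbers in circular order,
  starting with the number at which the next count begins.\<close>

function jos_removed :: "nat \<Rightarrow> nat list \<Rightarrow> nat list" where
  "jos_removed k xs =
     (if length xs \<le> 1 then []
      else (let i = (k - 1) mod length xs
            in xs ! i # jos_removed k (drop (Suc i) xs @ take i xs)))"
  by pat_completeness auto
termination
proof (relation "measure (\<lambda>(k, xs). length xs)")
  show "wf (measure (\<lambda>(k, xs). length xs))" by simp
next
  fix k :: nat and xs :: "nat list" and i
  assume h: "\<not> length xs \<le> 1" and i: "i = (k - 1) mod length xs"
  then have "length xs > 0" by (cases xs) auto
  then have "i < length xs" using i by simp
  then show "((k, drop (Suc i) xs @ take i xs), k, xs) \<in> measure (\<lambda>(k, xs). length xs)"
    by simp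
qed

definition jos_order :: "nat \<Rightarrow> nat \<Rightarrow> nat \<Rightarrow> nat" where
  "jos_order k n m =
     (let r = jos_removed k [1..<Suc n]
      in if m \<in> set r then Suc (LEAST i. i < length r \<and> r ! i = m) else n)"

definition mex :: "nat set \<Rightarrow> nat" where
  "mex S = (LEAST n. n \<notin> S)"

text \<open>Grundy number of Maximum Nim with rule function f(x) = floor(x/k).\<close>
function grundy :: "nat \<Rightarrow> nat \<Rightarrow> nat" where
  "grundy k x = mex ((\<lambda>u. grundy k (x - u)) ` {u. 1 \<le> u \<and> u \<le> x div k})"
  by pat_completeness auto
termination
proof (relation "measure (\<lambda>(k, x). x)")
  show "wf (measure (\<lambda>(k, x). x))" by simp
next
  fix k x u :: nat
  assume "u \<in> {u. 1 \<le> u \<and> u \<le> x div k}"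
  then have "1 \<le> u" "u \<le> x div k" by auto
  moreover have "x div k \<le> x" by (rule div_le_dividend)
  ultimately have "1 \<le> u" "u \<le> x" by linarith+
  then show "((k, x - u), k, x) \<in> measure (\<lambda>(k, x). x)" by simp
qed

end

theory Submission imports Defs begin

declare jos_removed.simps[simp del] grundy.simps[simp del]

lemma mex_upto: "mex {0..<a} = a"
  unfolding mex_def by (rule Least_equality) auto

lemma mex_minus: "b \<le> a \<Longrightarrow> mex ({0..a} - {b}) = b"
  unfolding mex_def by (rule Least_equality) auto

lemma gstep: "grundy k x = mex (grundy k ` {x - x div k..<x})"
proof -
  have "(\<lambda>u. grundy k (x - u)) ` {u. 1 \<le> u \<and> u \<le> x div k} = grundy k ` {x - x div k..<x}"
  proof -
    have q: "x div k \<le> x" by (rule div_le_dividend)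
    have "(\<lambda>u. x - u) ` {u. 1 \<le> u \<and> u \<le> x div k} = {x - x div k..<x}"
    proof (intro equalityI subsetI)
      fix y assume "y \<in> (\<lambda>u. x - u) ` {u. 1 \<le> u \<and> u \<le> x div k}"
      then obtain u where u: "1 \<le> u" "u \<le> x div k" "y = x - u" by blast
      have "x - x div k \<le> y" "y < x" using u q by linarith+
      then show "y \<in> {x - x div k..<x}" by simp
    next
      fix y assume y: "y \<in> {x - x div k..<x}"
      then have "x - y \<in> {u. 1 \<le> u \<and> u \<le> x div k}" "y = x - (x - y)" using q by auto
      then show "y \<in> (\<lambda>u. x - u) ` {u. 1 \<le> u \<and> u \<le> x div k}" by blast
    qed
    from arg_cong[where f="image (grundy k)", OF this] show ?thesis by (simp add: image_image)
  qed
  then show ?thesis by (subst grundy.simps) simp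
qed

definition W :: "nat \<Rightarrow> nat \<Rightarrow> bool" where
  "W k x \<longleftrightarrow> inj_on (grundy k) {x - x div k..x} \<and> grundy k ` {x - x div k..x} = {0..x div k}"

lemma div_Suc_cases:
  assumes "(k::nat) \<ge> 1"
  shows "Suc x div k = x div k \<or> Suc x div k = Suc (x div k)"
  using assms by (simp add: div_Suc)

lemma Wstep:
  assumes k: "k \<ge> 1" and w: "W k x"
  shows "(Suc x div k = x div k \<longrightarrow> grundy k (Suc x) = grundy k (x - x div k))
       \<and> (Suc x div k = Suc (x div k) \<longrightarrow> grundy k (Suc x) = Suc (x div k))
       \<and> W k (Suc x)"
proof -
  define q where "q = x div k"
  have qx: "q \<le> x" unfolding q_def by (rule div_le_dividend)
  have inj: "inj_on (grundy k) {x - q..x}" and img: "grundy k ` {x - q..x} = {0..q}"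
    using w unfolding W_def q_def by auto
  consider "Suc x div k = q" | "Suc x div k = Suc q" using div_Suc_cases[OF k] q_def by blast
  then show ?thesis
  proof cases
    case 1
    have set: "{Suc x - q..<Suc x} = {x - q..x} - {x - q}" using qx by auto
    have gi: "grundy k ` ({x - q..x} - {x - q}) = {0..q} - {grundy k (x - q)}"
      using inj img by (simp add: inj_on_image_set_diff)
    have gxq: "grundy k (x - q) \<le> q" using img qx by auto
    have gs: "grundy k (Suc x) = grundy k (x - q)"
      using gstep[of k "Suc x"] 1 set gi mex_minus[OF gxq] by simp
    have set2: "{Suc x - q..Suc x} = insert (Suc x) ({x - q..x} - {x - q})" using qx by auto
    have "inj_on (grundy k) {Suc x - q..Suc x}"
      unfolding set2 using inj gi gs by (auto simp: inj_on_diff)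
    moreover have "grundy k ` {Suc x - q..Suc x} = {0..q}"
      unfolding set2 using gi gs gxq by auto
    ultimately show ?thesis using 1 gs unfolding W_def q_def by simp
  next
    case 2
    have set: "{Suc x - Suc q..<Suc x} = {x - q..x}" by auto
    have gs: "grundy k (Suc x) = Suc q"
      using gstep[of k "Suc x"] 2 set img mex_upto[of "Suc q"] by (simp add: atLeastLessThanSuc_atLeastAtMost)
    have set2: "{Suc x - Suc q..Suc x} = insert (Suc x) {x - q..x}" by auto
    have "inj_on (grundy k) {Suc x - Suc q..Suc x}"
      unfolding set2 using inj img gs by auto
    moreover have "grundy k ` {Suc x - Suc q..Suc x} = {0..Suc q}"
      unfolding set2 using img gs by auto
    ultimately show ?thesis using 2 gs unfolding W_def q_def by simp
  qed
qed

lemma Wall: "k \<ge> 1 \<Longrightarrow> W k x"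
proof (induction x)
  case 0
  have "grundy k 0 = 0" using gstep[of k 0] mex_upto[of 0] by simp
  then show ?case unfolding W_def by simp
next
  case (Suc x)
  then show ?case using Wstep by blast
qed


lemma C1: assumes k: "k \<ge> 1" and d: "k dvd x" shows "grundy k x = x div k"
proof (cases x)
  case 0 then show ?thesis using gstep[of k 0] mex_upto[of 0] by simp
next
  case (Suc y)
  have "\<not> k dvd (Suc y) \<or> Suc y div k = Suc (y div k)" by (simp add: div_Suc)
  then have "Suc y div k = Suc (y div k)" using d Suc by simp
  then show ?thesis using Wstep[OF k Wall[OF k, of y]] Suc by simp
qed

lemma C2: assumes k: "k \<ge> 1" and d: "\<not> k dvd Suc y"
  shows "Suc y div k = y div k" "grundy k (Suc y) = grundy k (y - y div k)"
proof -
  show 1: "Suc y div k = y div k" using d by (simp add: div_Suc dvd_eq_mod_eq_0)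
  show "grundy k (Suc y) = grundy k (y - y div k)" using Wstep[OF k Wall[OF k, of y]] 1 by simp
qed

definition L :: "nat \<Rightarrow> nat \<Rightarrow> nat list" where
  "L k x = map (\<lambda>d. grundy k (x - d)) [0..<Suc (x div k)]"

lemma L_len: "length (L k x) = Suc (x div k)" by (simp add: L_def)
lemma L_nth: "d < Suc (x div k) \<Longrightarrow> L k x ! d = grundy k (x - d)"
  unfolding L_def by (simp del: upt_Suc)

lemma R1: assumes k: "k \<ge> 1" and d: "\<not> k dvd Suc y"
  shows "L k y = rotate1 (L k (Suc y))"
proof (rule nth_equalityI)
  have e: "Suc y div k = y div k" using C2[OF k d] by simp
  show "length (L k y) = length (rotate1 (L k (Suc y)))" by (simp add: L_len e)
  fix i assume "i < length (L k y)"
  then have i: "i < Suc (y div k)" by (simp add: L_len)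
  show "L k y ! i = rotate1 (L k (Suc y)) ! i"
  proof (cases "i = y div k")
    case True
    then show ?thesis using C2[OF k d] by (simp add: nth_rotate1 L_len L_nth e)
  next
    case False
    then have i2: "Suc i < Suc (y div k)" using i by simp
    then have "Suc i mod Suc (y div k) = Suc i" by simp
    then show ?thesis using i i2 L_nth[of "Suc i" k "Suc y"] by (simp add: nth_rotate1 L_len L_nth e)
  qed
qed

lemma R1iter: assumes k: "k \<ge> 1" and r: "r \<le> k - 1"
  shows "L k (j * k) = rotate r (L k (j * k + r))"
  using r
proof (induction r)
  case 0 then show ?case by simp
next
  case (Suc r)
  have nd: "\<not> k dvd Suc (j * k + r)"
  proof
    assume "k dvd Suc (j * k + r)"
    then have "k dvd Suc r" by (metis add_Suc_right dvd_add_right_iff dvd_triv_right)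
    then show False using Suc.prems k by (simp add: nat_dvd_not_less)
  qed
  have "L k (j * k + r) = rotate1 (L k (j * k + Suc r))" using R1[OF k nd] by simp
  moreover have "rotate (Suc r) (L k (j * k + Suc r)) = rotate r (rotate1 (L k (j * k + Suc r)))"
    by (simp only: rotate_Suc rotate1_rotate_swap)
  ultimately show ?case using Suc by simp
qed

lemma Lk1: fixes j k :: nat assumes k: "k \<ge> 1" and j: "j \<ge> 1" shows "(j * k - 1) div k = j - 1"
proof -
  obtain j0 where j0: "j = Suc j0" using j by (cases j) auto
  have e: "j * k - 1 = (k - 1) + k * j0" using k unfolding j0 by (simp add: mult.commute)
  have "(k - 1) div k = 0" using k by simp
  moreover have "((k - 1) + k * j0) div k = j0 + (k - 1) div k"
    using k by (intro div_mult_self2) simp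
  ultimately have "(j * k - 1) div k = j0" using e by simp
  then show ?thesis using j0 by simp
qed

lemma R2: assumes k: "k \<ge> 1" and j: "j \<ge> 1"
  shows "L k (j * k) = j # L k (j * k - 1)"
proof (rule nth_equalityI)
  have jk: "j * k = Suc (j * k - 1)" using j k by (simp add: Suc_le_eq)
  have e: "j * k div k = Suc ((j * k - 1) div k)"
    using Lk1[OF k j] j k by simp
  show "length (L k (j * k)) = length (j # L k (j * k - 1))" by (simp add: L_len e)
  fix i assume "i < length (L k (j * k))"
  then have i: "i < Suc (j * k div k)" by (simp add: L_len)
  show "L k (j * k) ! i = (j # L k (j * k - 1)) ! i"
  proof (cases i)
    case 0 then show ?thesis using C1[OF k] k by (simp add: L_nth)
  next
    case (Suc i')
    then have i1: "i' < Suc ((j * k - 1) div k)" using i e by simp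
    have "L k (j * k) ! i = grundy k (j * k - Suc i')" using L_nth[OF i] Suc by simp
    also have "\<dots> = grundy k (j * k - 1 - i')" by simp
    also have "\<dots> = L k (j * k - 1) ! i'" using L_nth[OF i1] by simp
    finally show ?thesis using Suc by simp
  qed
qed


lemma jos_map: "jos_removed k (map h xs) = map h (jos_removed k xs)"
proof (induction k xs rule: jos_removed.induct)
  case (1 k xs)
  show ?case
  proof (cases "length xs \<le> 1")
    case True then show ?thesis by (subst (1 2) jos_removed.simps) simp
  next
    case False
    define i where "i = (k - 1) mod length xs"
    have "length xs > 0" using False by (cases xs) auto
    then have il: "i < length xs" unfolding i_def by simp
    have "jos_removed k (map h xs) = map h xs ! i # jos_removed k (drop (Suc i) (map h xs) @ take i (map h xs))"
      using False by (subst jos_removed.simps) (simp add: i_def Let_def)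
    also have "\<dots> = h (xs ! i) # jos_removed k (map h (drop (Suc i) xs @ take i xs))"
      using il by (simp add: drop_map take_map)
    also have "\<dots> = h (xs ! i) # map h (jos_removed k (drop (Suc i) xs @ take i xs))"
      using 1 False i_def by simp
    also have "\<dots> = map h (jos_removed k xs)"
      using False by (subst (2) jos_removed.simps) (simp add: i_def Let_def)
    finally show ?thesis .
  qed
qed

lemma jos_subset: "set (jos_removed k xs) \<subseteq> set xs"
proof (induction k xs rule: jos_removed.induct)
  case (1 k xs)
  show ?case
  proof (cases "length xs \<le> 1")
    case True then show ?thesis by (subst jos_removed.simps) simp
  next
    case False
    define i where "i = (k - 1) mod length xs"
    have "length xs > 0" using False by (cases xs) auto
    then have il: "i < length xs" unfolding i_def by simp
    have "set (jos_removed k (drop (Suc i) xs @ take i xs)) \<subseteq> set xs"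
      using 1 False i_def set_drop_subset set_take_subset by fastforce
    then show ?thesis using False il by (subst jos_removed.simps) (simp add: i_def Let_def)
  qed
qed

lemma M: assumes k: "k \<ge> 1" and j: "j \<ge> 1"
  shows "jos_removed k (L k (j * k - 1)) = rev [1..<j]"
  using j
proof (induction j rule: dec_induct)
  case base
  have "length (L k (k - 1)) = 1" using L_len[of k "k - 1"] k by simp
  then show ?case by (subst jos_removed.simps) simp
next
  case (step j1)
  define V where "V = L k (Suc j1 * k - 1)"
  have lV: "length V = Suc j1" unfolding V_def L_len using Lk1[OF k, of "Suc j1"] by simp
  define i where "i = (k - 1) mod length V"
  have il: "i < length V" unfolding i_def lV by simp
  have e1: "Suc j1 * k - 1 = j1 * k + (k - 1)" using k by simp
  have rot: "rotate (k - 1) V = L k (j1 * k)" unfolding V_def e1 using R1iter[OF k, of "k - 1" j1] by simp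
  also have "\<dots> = j1 # L k (j1 * k - 1)" using R2[OF k step.hyps(1)] .
  finally have "drop i V @ take i V = j1 # L k (j1 * k - 1)" by (simp add: rotate_drop_take i_def)
  moreover have "drop i V = V ! i # drop (Suc i) V" using il by (simp add: Cons_nth_drop_Suc)
  ultimately have a: "V ! i = j1" and b: "drop (Suc i) V @ take i V = L k (j1 * k - 1)" by simp_all
  have "jos_removed k V = V ! i # jos_removed k (drop (Suc i) V @ take i V)"
    using lV step.hyps(1) by (subst jos_removed.simps) (simp add: i_def Let_def)
  then show ?case using a b step.IH step.hyps(1) unfolding V_def[symmetric] by simp
qed


theorem theorem2:
  fixes k n m :: nat
  assumes "k \<ge> 2" and "1 \<le> m" and "m \<le> n"
  shows "n - jos_order k n m = grundy k (n * k - m)"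
proof -
  have k: "k \<ge> 1" using assms(1) by simp
  have n: "n \<ge> 1" using assms by simp
  define h where "h = (\<lambda>m. grundy k (n * k - m))"
  define r where "r = jos_removed k [1..<Suc n]"
  have Lmap: "L k (n * k - 1) = map h [1..<Suc n]"
  proof (rule nth_equalityI)
    show "length (L k (n * k - 1)) = length (map h [1..<Suc n])"
      using L_len[of k "n * k - 1"] Lk1[OF k n] n by simp
    fix i assume "i < length (L k (n * k - 1))"
    then have i: "i < Suc ((n * k - 1) div k)" by (simp add: L_len)
    then have i2: "i < n" using Lk1[OF k n] n by simp
    show "L k (n * k - 1) ! i = map h [1..<Suc n] ! i"
      using L_nth[OF i] i2 by (simp add: h_def nth_upt del: upt_Suc)
  qed
  have mr: "map h r = rev [1..<n]"
    unfolding r_def jos_map[symmetric] Lmap[symmetric] using M[OF k n] .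
  have rsub: "set r \<subseteq> {1..n}" using jos_subset[of k "[1..<Suc n]"] unfolding r_def by auto
  have Wn: "W k (n * k - 1)" using Wall[OF k] .
  have win: "{n * k - 1 - (n * k - 1) div k..n * k - 1} = (\<lambda>m. n * k - m) ` {1..n}"
  proof -
    have nk: "n \<le> n * k" using k by simp
    have e: "n * k - 1 - (n * k - 1) div k = n * k - n"
    proof -
      define N where "N = n * k"
      have "N - 1 - (n - 1) = N - n" using nk n unfolding N_def[symmetric] by arith
      then show ?thesis using Lk1[OF k n] unfolding N_def by simp
    qed
    show ?thesis unfolding e
    proof (intro equalityI subsetI)
      fix y assume "y \<in> {n * k - n..n * k - 1}"
      then have y1: "n * k - n \<le> y" "y \<le> n * k - 1" by auto
      define N where "N = n * k"
      have a1: "N - n \<le> y" "y \<le> N - 1" "n \<le> N" using y1 nk unfolding N_def by auto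
      have "1 \<le> N - y" "N - y \<le> n" "y = N - (N - y)" using a1 n by arith+
      then have "N - y \<in> {1..n}" "y = N - (N - y)" by auto
      then have "n * k - y \<in> {1..n}" "y = n * k - (n * k - y)" unfolding N_def .
      then show "y \<in> (\<lambda>m. n * k - m) ` {1..n}" by blast
    qed (use nk in auto)
  qed
  have nk: "n \<le> n * k" using k by simp
  have injm: "inj_on (\<lambda>m. n * k - m) {1..n}"
  proof (rule inj_onI)
    fix a b assume ab: "a \<in> {1..n}" "b \<in> {1..n}" "n * k - a = n * k - b"
    have "a \<le> n * k" "b \<le> n * k" using ab(1,2) order_trans[OF _ nk] by auto
    moreover define N where "N = n * k"
    ultimately have "a \<le> N" "b \<le> N" "N - a = N - b" using ab(3) by auto
    then show "a = b" by arith
  qed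
  have hc: "h = grundy k \<circ> (\<lambda>m. n * k - m)" unfolding h_def by auto
  have hinj: "inj_on h {1..n}"
    unfolding hc using Wn unfolding W_def win by (intro comp_inj_on[OF injm]) simp
  have himg: "h ` {1..n} = {0..n - 1}"
    unfolding hc image_comp[symmetric] using Wn Lk1[OF k n] unfolding W_def win by simp
  have mn: "m \<in> {1..n}" using assms by simp
  show ?thesis
  proof (cases "m \<in> set r")
    case True
    define i where "i = (LEAST i. i < length r \<and> r ! i = m)"
    have ex: "\<exists>i. i < length r \<and> r ! i = m" using True by (simp add: in_set_conv_nth)
    have il: "i < length r" and ri: "r ! i = m" using LeastI_ex[OF ex] unfolding i_def by auto
    have lr: "length r = n - 1" using arg_cong[OF mr, of length] by simp
    have "h m = map h r ! i" using il ri by simp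
    also have "\<dots> = n - 1 - i" unfolding mr using il lr by (simp add: rev_nth)
    finally have "h m = n - 1 - i" .
    moreover have "jos_order k n m = Suc i"
      unfolding jos_order_def Let_def r_def[symmetric] i_def using True by simp
    ultimately show ?thesis unfolding h_def by simp
  next
    case False
    have "jos_order k n m = n" unfolding jos_order_def Let_def r_def[symmetric] using False by simp
    moreover have "h m = 0"
    proof (rule ccontr)
      assume h0: "h m \<noteq> 0"
      have "h m \<in> {0..n-1}" using himg mn by blast
      then have "h m \<in> set (map h r)" unfolding mr using h0 by auto
      then obtain m' where m': "m' \<in> set r" "h m' = h m" by auto
      then have "m' = m" using hinj rsub mn by (meson inj_on_def subsetD)
      then show False using m' False by simp
    qed
    ultimately show ?thesis unfolding h_def by simp
  qed
qed

end
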